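(* Let $(S,\mathscr{S})$ be a measurable space, $n\le N$, $g:S^n\to\mathbb{R}$ a function and $f:S^N\to\mathbb{R}$ a symmetric $\mathscr{S}^N$-measurable function. Then: (i) $\|U^N_ng\|\le\|g\|$; (ii) $U^{n_3}_{n_1}=U^{n_3}_{n_2}\circ U^{n_2}_{n_1}$ whenever $n_1\le n_2\le n_3$; (iii) $\|U^N_ng\|$ is nonincreasing in $N$ ($N\ge n$); (iv) $f$ is measurable with respect to the $\sigma$-algebra generated by the functions $U^N_n h$, where $h$ ranges over all measurable functions $S^n\to\mathbb{R}$.
   Context: $\|\cdot\|$ is the sup norm. A function on $S^k$ is symmetric if it is invariant under all permutations of its arguments. With $\mathfrak S[n,N]$ the set of injections $\{1,\ldots,n\}\to\{1,\ldots,N\}$ and $(N)_n=N(N-1)\cdots(N-n+1)$, $U^N_ng(x_1,\ldots,x_N)=\frac1{(N)_n}\sum_{\sigma\in\mathfrak S[n,N]}g(x_{\sigma(1)},\ldots,x_{\sigma(n)})$. *)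

theory Defs
  imports "HOL-Analysis.Analysis"
begin

text \<open>Points of S^n are extensional functions on {..<n}; S^n carries the product
  sigma-algebra PiM {..<n} (\<lambda>_. M).\<close>

abbreviation Spow :: "'a measure \<Rightarrow> nat \<Rightarrow> (nat \<Rightarrow> 'a) measure" where
  "Spow M n \<equiv> PiM {..<n} (\<lambda>_. M)"

text \<open>The set of injections {1..n} -> {1..N} (here indexed from 0).\<close>
definition injs :: "nat \<Rightarrow> nat \<Rightarrow> (nat \<Rightarrow> nat) set" where
  "injs n N = {\<sigma> \<in> {..<n} \<rightarrow>\<^sub>E {..<N}. inj_on \<sigma> {..<n}}"

definition falling :: "nat \<Rightarrow> nat \<Rightarrow> real" where
  "falling N n = (\<Prod>i<n. real N - real i)"

definition U :: "nat \<Rightarrow> nat \<Rightarrow> ((nat \<Rightarrow> 'a) \<Rightarrow> real) \<Rightarrow> (nat \<Rightarrow> 'a) \<Rightarrow> real" where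
  "U N n g x = (1 / falling N n) * (\<Sum>\<sigma>\<in>injs n N. g (restrict (\<lambda>i. x (\<sigma> i)) {..<n}))"

text \<open>Sup norm of a function on S^n (possibly infinite; 0 on an empty space).\<close>
definition supnorm :: "'a measure \<Rightarrow> nat \<Rightarrow> ((nat \<Rightarrow> 'a) \<Rightarrow> real) \<Rightarrow> ennreal" where
  "supnorm M n g = (SUP x \<in> space (Spow M n). ennreal \<bar>g x\<bar>)"

definition symmetric_fun :: "'a measure \<Rightarrow> nat \<Rightarrow> ((nat \<Rightarrow> 'a) \<Rightarrow> real) \<Rightarrow> bool" where
  "symmetric_fun M N f \<longleftrightarrow> (\<forall>\<pi> x. \<pi> permutes {..<N} \<longrightarrow> x \<in> space (Spow M N) \<longrightarrow>
      f (restrict (\<lambda>i. x (\<pi> i)) {..<N}) = f x)"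

definition U_sigma :: "'a measure \<Rightarrow> nat \<Rightarrow> nat \<Rightarrow> (nat \<Rightarrow> 'a) measure" where
  "U_sigma M N n = sigma (space (Spow M N))
     {U N n h -` B \<inter> space (Spow M N) | h B. h \<in> borel_measurable (Spow M n) \<and> B \<in> sets borel}"

end

theory Submission
  imports Defs "HOL-Combinatorics.Permutations"
begin



lemma injs_iff: "\<sigma> \<in> injs n N \<longleftrightarrow> \<sigma> \<in> {..<n} \<rightarrow>\<^sub>E {..<N} \<and> inj_on \<sigma> {..<n}"
  by (simp add: injs_def)

lemma finite_injs: "finite (injs n N)"
proof -
  have "injs n N \<subseteq> {..<n} \<rightarrow>\<^sub>E {..<N}" by (auto simp: injs_def)
  moreover have "finite ({..<n} \<rightarrow>\<^sub>E {..<N})" by (intro finite_PiE) auto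
  ultimately show ?thesis by (rule finite_subset)
qed

lemma injs_restrict: "\<sigma> \<in> injs n N \<Longrightarrow> restrict \<sigma> {..<n} = \<sigma>"
  by (auto simp: injs_def intro: PiE_restrict)

lemma injs_0: "injs 0 N = {\<lambda>_. undefined}"
  by (auto simp: injs_def)

lemma injs_fiber:
  assumes r: "\<rho> \<in> injs n N"
  shows "{\<sigma>\<in>injs (Suc n) N. restrict \<sigma> {..<n} = \<rho>} = (\<lambda>k. \<rho>(n:=k)) ` ({..<N} - \<rho> ` {..<n})"
proof (intro equalityI subsetI)
  fix \<sigma> assume "\<sigma> \<in> {\<sigma>\<in>injs (Suc n) N. restrict \<sigma> {..<n} = \<rho>}"
  then have s: "\<sigma> \<in> {..<Suc n} \<rightarrow>\<^sub>E {..<N}" "inj_on \<sigma> {..<Suc n}" and e: "restrict \<sigma> {..<n} = \<rho>"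
    by (auto simp: injs_def)
  have "\<sigma> = \<rho>(n := \<sigma> n)"
  proof
    fix i show "\<sigma> i = (\<rho>(n := \<sigma> n)) i"
      using s(1) e[symmetric] by (cases "i < n"; cases "i = n") (auto simp: PiE_def extensional_def)
  qed
  moreover have "\<sigma> n \<in> {..<N} - \<rho> ` {..<n}"
  proof -
    have "\<sigma> n < N" using s(1) by auto
    moreover have "\<sigma> n \<notin> \<sigma> ` {..<n}" using s(2) unfolding inj_on_def by (metis image_iff lessThan_iff less_Suc_eq nat_neq_iff)
    moreover have "\<rho> ` {..<n} = \<sigma> ` {..<n}" using e[symmetric] by auto
    ultimately show ?thesis by auto
  qed
  ultimately show "\<sigma> \<in> (\<lambda>k. \<rho>(n:=k)) ` ({..<N} - \<rho> ` {..<n})" by blast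
next
  fix \<sigma> assume "\<sigma> \<in> (\<lambda>k. \<rho>(n:=k)) ` ({..<N} - \<rho> ` {..<n})"
  then obtain k where k: "k < N" "k \<notin> \<rho> ` {..<n}" and \<sigma>: "\<sigma> = \<rho>(n:=k)" by auto
  have r1: "\<rho> \<in> {..<n} \<rightarrow>\<^sub>E {..<N}" and r2: "inj_on \<rho> {..<n}" using r by (auto simp: injs_def)
  have "\<sigma> \<in> {..<Suc n} \<rightarrow>\<^sub>E {..<N}"
    using r1 k unfolding \<sigma> by (auto simp: PiE_def extensional_def Pi_def less_Suc_eq)
  moreover have "inj_on \<sigma> {..<Suc n}"
  proof -
    have "{..<Suc n} = insert n {..<n}" by auto
    moreover have "inj_on \<sigma> {..<n}" using r2 unfolding \<sigma> by (auto simp: inj_on_def)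
    moreover have "\<sigma> n \<notin> \<sigma> ` ({..<n} - {n})" using k unfolding \<sigma> by auto
    ultimately show ?thesis by simp
  qed
  moreover have "restrict \<sigma> {..<n} = \<rho>"
    using r1 unfolding \<sigma> by (auto simp: PiE_def extensional_def restrict_def fun_eq_iff)
  ultimately show "\<sigma> \<in> {\<sigma>\<in>injs (Suc n) N. restrict \<sigma> {..<n} = \<rho>}" by (simp add: injs_def)
qed

lemma card_injs_fiber:
  assumes r: "\<rho> \<in> injs n N"
  shows "card {\<sigma>\<in>injs (Suc n) N. restrict \<sigma> {..<n} = \<rho>} = N - n"
proof -
  have r1: "\<rho> \<in> {..<n} \<rightarrow>\<^sub>E {..<N}" and r2: "inj_on \<rho> {..<n}" using r by (auto simp: injs_def)
  have "inj_on (\<lambda>k. \<rho>(n:=k)) ({..<N} - \<rho> ` {..<n})"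
    by (auto simp: inj_on_def fun_eq_iff)
  then have "card {\<sigma>\<in>injs (Suc n) N. restrict \<sigma> {..<n} = \<rho>} = card ({..<N} - \<rho> ` {..<n})"
    unfolding injs_fiber[OF r] by (rule card_image)
  also have "\<dots> = N - card (\<rho> ` {..<n})"
    using r1 by (subst card_Diff_subset) auto
  also have "card (\<rho> ` {..<n}) = n" using r2 by (simp add: card_image)
  finally show ?thesis .
qed

lemma sum_injs_Suc:
  "(\<Sum>\<sigma>\<in>injs (Suc n) N. G (restrict \<sigma> {..<n})) = real (N - n) * (\<Sum>\<rho>\<in>injs n N. G \<rho>)"
proof -
  have sub: "(\<lambda>\<sigma>. restrict \<sigma> {..<n}) ` injs (Suc n) N \<subseteq> injs n N"
    by (auto simp: injs_def PiE_def extensional_def Pi_def inj_on_def)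
  have "(\<Sum>\<sigma>\<in>injs (Suc n) N. G (restrict \<sigma> {..<n}))
      = (\<Sum>\<rho>\<in>injs n N. \<Sum>\<sigma>\<in>{\<sigma>\<in>injs (Suc n) N. restrict \<sigma> {..<n} = \<rho>}. G (restrict \<sigma> {..<n}))"
    by (rule sum.group[symmetric, OF finite_injs finite_injs sub])
  also have "\<dots> = (\<Sum>\<rho>\<in>injs n N. real (N - n) * G \<rho>)"
    by (rule sum.cong) (auto simp: card_injs_fiber)
  finally show ?thesis by (simp add: sum_distrib_left)
qed

lemma sum_injs_restrict:
  assumes "m \<le> n"
  shows "(\<Sum>\<sigma>\<in>injs n N. G (restrict \<sigma> {..<m})) = (\<Prod>j\<in>{m..<n}. real (N - j)) * (\<Sum>\<rho>\<in>injs m N. G \<rho>)"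
  using assms
proof (induction n arbitrary: G)
  case 0
  then show ?case by (simp add: injs_0)
next
  case (Suc n)
  show ?case
  proof (cases "m = Suc n")
    case True
    then show ?thesis by (auto intro!: sum.cong simp: injs_restrict)
  next
    case False
    then have mn: "m \<le> n" using Suc.prems by simp
    have "(\<Sum>\<sigma>\<in>injs (Suc n) N. G (restrict \<sigma> {..<m}))
        = (\<Sum>\<sigma>\<in>injs (Suc n) N. G (restrict (restrict \<sigma> {..<n}) {..<m}))"
      using mn by (intro sum.cong refl arg_cong[where f=G]) (auto simp: restrict_def fun_eq_iff)
    also have "\<dots> = real (N - n) * (\<Sum>\<rho>\<in>injs n N. G (restrict \<rho> {..<m}))"
      by (rule sum_injs_Suc)
    also have "\<dots> = real (N - n) * ((\<Prod>j\<in>{m..<n}. real (N - j)) * (\<Sum>\<rho>\<in>injs m N. G \<rho>))"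
      by (simp only: Suc.IH[OF mn])
    also have "\<dots> = (\<Prod>j\<in>{m..<Suc n}. real (N - j)) * (\<Sum>\<rho>\<in>injs m N. G \<rho>)"
      using mn by (simp add: prod.atLeastLessThan_Suc)
    finally show ?thesis .
  qed
qed

lemma card_injs: "n \<le> N \<Longrightarrow> real (card (injs n N)) = falling N n"
proof -
  assume nN: "n \<le> N"
  have "real (card (injs n N)) = (\<Prod>j\<in>{0..<n}. real (N - j))"
    using sum_injs_restrict[where m=0 and n=n and N=N and G="\<lambda>_. 1::real"] by (simp add: injs_0)
  also have "\<dots> = falling N n"
    unfolding falling_def atLeast0LessThan using nN by (intro prod.cong) auto
  finally show ?thesis .
qed

lemma falling_pos: "n \<le> N \<Longrightarrow> falling N n > 0"
  unfolding falling_def by (intro prod_pos) auto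

lemma sum_injs_1: "(\<Sum>\<rho>\<in>injs 1 N. G (\<rho> 0)) = (\<Sum>k<N. G k)"
proof -
  have "bij_betw (\<lambda>\<rho>. \<rho> 0) (injs 1 N) {..<N}"
  proof (rule bij_betw_imageI)
    show "inj_on (\<lambda>\<rho>. \<rho> 0) (injs 1 N)"
    proof (rule inj_onI)
      fix x y assume x: "x \<in> injs 1 N" and y: "y \<in> injs 1 N" and e: "x 0 = y 0"
      show "x = y"
      proof
        fix i show "x i = y i"
        proof (cases "i = 0")
          case False
          then have "i \<notin> {..<1::nat}" by simp
          then show ?thesis using x y unfolding injs_def by (metis (no_types, lifting) PiE_arb mem_Collect_eq)
        qed (use e in simp)
      qed
    qed
    show "(\<lambda>\<rho>. \<rho> 0) ` injs 1 N = {..<N}"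
    proof (intro equalityI subsetI)
      fix k assume k: "k \<in> {..<N}"
      have "(\<lambda>i. if i = 0 then k else undefined) \<in> injs 1 N"
        using k by (auto simp: injs_def PiE_def extensional_def lessThan_Suc)
      then show "k \<in> (\<lambda>\<rho>. \<rho> 0) ` injs 1 N" by (rule rev_image_eqI) simp
    next
      fix k assume "k \<in> (\<lambda>\<rho>. \<rho> 0) ` injs 1 N"
      then obtain \<rho> where "\<rho> \<in> injs 1 N" "k = \<rho> 0" by blast
      then show "k \<in> {..<N}" unfolding injs_def by (auto simp: PiE_iff)
    qed
  qed
  then show ?thesis by (rule sum.reindex_bij_betw)
qed




lemma injs_extend_perm:
  assumes t: "\<tau> \<in> injs m n"
  shows "\<exists>p. p permutes {..<n} \<and> (\<forall>i<m. p i = \<tau> i)"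
proof -
  have t1: "\<tau> \<in> {..<m} \<rightarrow>\<^sub>E {..<n}" and t2: "inj_on \<tau> {..<m}" using t by (auto simp: injs_def)
  have sub: "\<tau> ` {..<m} \<subseteq> {..<n}" using t1 by auto
  have cm: "card (\<tau> ` {..<m}) = m" using t2 by (simp add: card_image)
  have mn: "m \<le> n" using card_mono[OF _ sub] cm by simp
  define B where "B = {..<n} - \<tau> ` {..<m}"
  have cB: "card B = n - m" unfolding B_def using sub cm by (simp add: card_Diff_subset)
  obtain b where b: "bij_betw b {m..<n} B"
    using finite_same_card_bij[of "{m..<n}" B] cB unfolding B_def by auto
  define p where "p i = (if i < m then \<tau> i else if i < n then b i else i)" for i
  have b1: "bij_betw p {..<m} (\<tau> ` {..<m})"
    using inj_on_imp_bij_betw[OF t2] by (rule bij_betw_cong[THEN iffD1, rotated]) (simp add: p_def)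
  have b2: "bij_betw p {m..<n} B"
    using b by (rule bij_betw_cong[THEN iffD1, rotated]) (simp add: p_def)
  have "bij_betw p ({..<m} \<union> {m..<n}) (\<tau> ` {..<m} \<union> B)"
    by (rule bij_betw_combine[OF b1 b2]) (auto simp: B_def)
  moreover have "{..<m} \<union> {m..<n} = {..<n}" using mn by auto
  moreover have "\<tau> ` {..<m} \<union> B = {..<n}" using sub by (auto simp: B_def)
  ultimately have "bij_betw p {..<n} {..<n}" by simp
  then have "p permutes {..<n}" by (rule bij_imp_permutes) (use mn in \<open>simp add: p_def\<close>)
  then show ?thesis by (auto simp: p_def)
qed

lemma injs_comp_perm:
  assumes p: "p permutes {..<k}" and s: "\<sigma> \<in> injs k N"
  shows "restrict (\<sigma> \<circ> p) {..<k} \<in> injs k N"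
proof -
  have s1: "\<sigma> \<in> {..<k} \<rightarrow>\<^sub>E {..<N}" and s2: "inj_on \<sigma> {..<k}" using s by (auto simp: injs_def)
  have pk: "\<And>i. i < k \<Longrightarrow> p i < k" using permutes_in_image[OF p] by auto
  have pinj: "inj p" using permutes_inj[OF p] .
  have "inj_on (restrict (\<sigma> \<circ> p) {..<k}) {..<k}"
  proof (rule inj_onI)
    fix a b assume a: "a \<in> {..<k}" and b: "b \<in> {..<k}" and e: "restrict (\<sigma> \<circ> p) {..<k} a = restrict (\<sigma> \<circ> p) {..<k} b"
    from e a b have "\<sigma> (p a) = \<sigma> (p b)" by simp
    then have "p a = p b" using s2 pk[of a] pk[of b] a b by (simp add: inj_on_def)
    then show "a = b" using pinj by (simp add: inj_eq)
  qed
  moreover have "restrict (\<sigma> \<circ> p) {..<k} \<in> {..<k} \<rightarrow>\<^sub>E {..<N}"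
  proof (rule restrict_PiE_iff[THEN iffD2], intro ballI)
    fix i assume "i \<in> {..<k}"
    then have "p i < k" using pk by simp
    then show "(\<sigma> \<circ> p) i \<in> {..<N}" using s1 by (auto simp: PiE_iff)
  qed
  ultimately show ?thesis by (simp add: injs_def)
qed

lemma injs_comp_perm_inv:
  assumes p: "p permutes {..<k}" and s: "\<sigma> \<in> injs k N"
  shows "restrict (restrict (\<sigma> \<circ> p) {..<k} \<circ> inv p) {..<k} = \<sigma>"
        "restrict (restrict (\<sigma> \<circ> inv p) {..<k} \<circ> p) {..<k} = \<sigma>"
proof -
  have s1: "\<sigma> \<in> {..<k} \<rightarrow>\<^sub>E {..<N}" using s by (auto simp: injs_def)
  have pk: "\<And>i. i < k \<Longrightarrow> p i < k" using permutes_in_image[OF p] by auto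
  have ipk: "\<And>i. i < k \<Longrightarrow> inv p i < k" using permutes_in_image[OF permutes_inv[OF p]] by auto
  have out: "\<sigma> i = undefined" if "\<not> i < k" for i
    using s1 that by (intro PiE_arb[of \<sigma> "{..<k}"]) auto
  show "restrict (restrict (\<sigma> \<circ> p) {..<k} \<circ> inv p) {..<k} = \<sigma>"
  proof
    fix i show "restrict (restrict (\<sigma> \<circ> p) {..<k} \<circ> inv p) {..<k} i = \<sigma> i"
    proof (cases "i < k")
      case True
      then show ?thesis using ipk[of i] permutes_inverses(1)[OF p, of i] by simp
    qed (simp add: out)
  qed
  show "restrict (restrict (\<sigma> \<circ> inv p) {..<k} \<circ> p) {..<k} = \<sigma>"
  proof
    fix i show "restrict (restrict (\<sigma> \<circ> inv p) {..<k} \<circ> p) {..<k} i = \<sigma> i"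
    proof (cases "i < k")
      case True
      then show ?thesis using pk[of i] permutes_inverses(2)[OF p, of i] by simp
    qed (simp add: out)
  qed
qed

lemma sum_injs_perm:
  assumes p: "p permutes {..<k}"
  shows "(\<Sum>\<sigma>\<in>injs k N. G (restrict (\<sigma> \<circ> p) {..<k})) = (\<Sum>\<sigma>\<in>injs k N. G \<sigma>)"
proof -
  have "bij_betw (\<lambda>\<sigma>. restrict (\<sigma> \<circ> p) {..<k}) (injs k N) (injs k N)"
  proof (rule bij_betw_byWitness[where f'="\<lambda>\<sigma>. restrict (\<sigma> \<circ> inv p) {..<k}"])
    show "\<forall>a\<in>injs k N. restrict (restrict (a \<circ> p) {..<k} \<circ> inv p) {..<k} = a"
      using injs_comp_perm_inv(1)[OF p] by blast
    show "\<forall>a\<in>injs k N. restrict (restrict (a \<circ> inv p) {..<k} \<circ> p) {..<k} = a"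
      using injs_comp_perm_inv(2)[OF p] by blast
    show "(\<lambda>\<sigma>. restrict (\<sigma> \<circ> p) {..<k}) ` injs k N \<subseteq> injs k N"
      using injs_comp_perm[OF p] by blast
    show "(\<lambda>\<sigma>. restrict (\<sigma> \<circ> inv p) {..<k}) ` injs k N \<subseteq> injs k N"
      using injs_comp_perm[OF permutes_inv[OF p]] by blast
  qed
  then show ?thesis by (rule sum.reindex_bij_betw)
qed

lemma U_comp:
  assumes n12: "n1 \<le> n2" and n23: "n2 \<le> n3"
  shows "U n3 n1 h x = U n3 n2 (U n2 n1 h) x"
proof -
  define K where "K \<rho> = h (restrict (\<lambda>i. x (\<rho> i)) {..<n1})" for \<rho> :: "nat \<Rightarrow> nat"
  have K_restr: "K (restrict \<rho> {..<n1}) = K \<rho>" for \<rho>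
    unfolding K_def by (intro arg_cong[where f=h]) (auto simp: restrict_def fun_eq_iff)
  have step1: "U n2 n1 h (restrict (\<lambda>i. x (\<sigma> i)) {..<n2}) = (1 / falling n2 n1) * (\<Sum>\<tau>\<in>injs n1 n2. K (\<sigma> \<circ> \<tau>))"
    for \<sigma>
    unfolding U_def K_def
    by (intro arg_cong2[where f="(*)"] refl sum.cong arg_cong[where f=h])
       (auto simp: restrict_def fun_eq_iff injs_def PiE_iff)
  have step3: "(\<Sum>\<sigma>\<in>injs n2 n3. K (\<sigma> \<circ> \<tau>)) = (\<Sum>\<sigma>\<in>injs n2 n3. K \<sigma>)" if t: "\<tau> \<in> injs n1 n2" for \<tau>
  proof -
    obtain p where p: "p permutes {..<n2}" "\<forall>i<n1. p i = \<tau> i"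
      using injs_extend_perm[OF t] by blast
    have "(\<Sum>\<sigma>\<in>injs n2 n3. K \<sigma>) = (\<Sum>\<sigma>\<in>injs n2 n3. K (restrict (\<sigma> \<circ> p) {..<n2}))"
      by (rule sum_injs_perm[OF p(1), symmetric])
    also have "\<dots> = (\<Sum>\<sigma>\<in>injs n2 n3. K (\<sigma> \<circ> \<tau>))"
      unfolding K_def using p(2) n12
      by (intro sum.cong refl arg_cong[where f=h]) (auto simp: restrict_def fun_eq_iff)
    finally show ?thesis by simp
  qed
  define P where "P = (\<Prod>j\<in>{n1..<n2}. real (n3 - j))"
  have step4: "(\<Sum>\<sigma>\<in>injs n2 n3. K \<sigma>) = P * (\<Sum>\<rho>\<in>injs n1 n3. K \<rho>)"
    using sum_injs_restrict[OF n12, of "\<lambda>\<rho>. K \<rho>" n3] unfolding P_def by (simp add: K_restr)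
  have f32: "falling n3 n2 = falling n3 n1 * P"
  proof -
    have "falling n3 n2 = (\<Prod>j\<in>{0..<n2}. real n3 - real j)" by (simp add: falling_def atLeast0LessThan)
    also have "\<dots> = (\<Prod>j\<in>{0..<n1}. real n3 - real j) * (\<Prod>j\<in>{n1..<n2}. real n3 - real j)"
      using n12 by (simp add: prod.atLeastLessThan_concat)
    also have "(\<Prod>j\<in>{n1..<n2}. real n3 - real j) = P"
      unfolding P_def using n23 by (intro prod.cong) auto
    finally show ?thesis by (simp add: falling_def atLeast0LessThan)
  qed
  have Ppos: "P > 0" unfolding P_def using n23 by (intro prod_pos) auto
  have c21: "real (card (injs n1 n2)) = falling n2 n1" using card_injs[OF n12] .
  have f21: "falling n2 n1 > 0" using falling_pos[OF n12] .
  have f31: "falling n3 n1 > 0" using falling_pos n12 n23 by simp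
  have "U n3 n2 (U n2 n1 h) x = (1 / falling n3 n2) * (\<Sum>\<sigma>\<in>injs n2 n3. (1 / falling n2 n1) * (\<Sum>\<tau>\<in>injs n1 n2. K (\<sigma> \<circ> \<tau>)))"
    unfolding U_def[where g="U n2 n1 h"] by (simp only: step1)
  also have "\<dots> = (1 / falling n3 n2) * (1 / falling n2 n1) * (\<Sum>\<tau>\<in>injs n1 n2. \<Sum>\<sigma>\<in>injs n2 n3. K (\<sigma> \<circ> \<tau>))"
    by (simp add: sum_distrib_left sum.swap[of _ "injs n2 n3"] mult.assoc)
  also have "\<dots> = (1 / falling n3 n2) * (1 / falling n2 n1) * (\<Sum>\<tau>\<in>injs n1 n2. P * (\<Sum>\<rho>\<in>injs n1 n3. K \<rho>))"
    using step3 step4 by simp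
  also have "\<dots> = (1 / falling n3 n2) * (1 / falling n2 n1) * (falling n2 n1 * (P * (\<Sum>\<rho>\<in>injs n1 n3. K \<rho>)))"
    using c21 by simp
  also have "\<dots> = (1 / falling n3 n1) * (\<Sum>\<rho>\<in>injs n1 n3. K \<rho>)"
    using f32 Ppos f21 f31 by (simp add: field_simps)
  also have "\<dots> = U n3 n1 h x" unfolding U_def K_def ..
  finally show ?thesis by simp
qed

lemma U_point_space:
  assumes "x \<in> space (Spow M N)" "\<sigma> \<in> injs n N"
  shows "restrict (\<lambda>i. x (\<sigma> i)) {..<n} \<in> space (Spow M n)"
  using assms by (auto simp: space_PiM PiE_iff injs_def)

lemma U_norm:
  assumes nN: "n \<le> N"
  shows "supnorm M N (U N n g) \<le> supnorm M n g"
  unfolding supnorm_def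
proof (rule SUP_least)
  fix x assume x: "x \<in> space (Spow M N)"
  define S where "S = (SUP y \<in> space (Spow M n). ennreal \<bar>g y\<bar>)"
  show "ennreal \<bar>U N n g x\<bar> \<le> S"
  proof (cases "S = top")
    case True then show ?thesis by simp
  next
    case False
    define s where "s = enn2real S"
    have Ss: "S = ennreal s" using False unfolding s_def by (simp add: ennreal_enn2real_if)
    have s0: "s \<ge> 0" unfolding s_def by simp
    have bnd: "\<bar>g y\<bar> \<le> s" if "y \<in> space (Spow M n)" for y
    proof -
      have "ennreal \<bar>g y\<bar> \<le> S" unfolding S_def using that by (rule SUP_upper)
      then show ?thesis using Ss s0 by (simp add: ennreal_le_iff)
    qed
    have fpos: "falling N n > 0" using falling_pos[OF nN] .
    have "\<bar>U N n g x\<bar> = (1 / falling N n) * \<bar>\<Sum>\<sigma>\<in>injs n N. g (restrict (\<lambda>i. x (\<sigma> i)) {..<n})\<bar>"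
      unfolding U_def using fpos by (simp add: abs_mult)
    also have "\<dots> \<le> (1 / falling N n) * (\<Sum>\<sigma>\<in>injs n N. s)"
      using fpos by (intro mult_left_mono order.trans[OF sum_abs] sum_mono bnd U_point_space[OF x]) auto
    also have "\<dots> = s" using card_injs[OF nN] fpos by simp
    finally show ?thesis using Ss by (simp add: ennreal_leI)
  qed
qed

lemma U_norm_mono:
  assumes "n \<le> N1" "N1 \<le> N2"
  shows "supnorm M N2 (U N2 n g) \<le> supnorm M N1 (U N1 n g)"
proof -
  have "supnorm M N2 (U N2 n g) = supnorm M N2 (U N2 N1 (U N1 n g))"
    unfolding supnorm_def by (intro SUP_cong refl arg_cong[where f="\<lambda>v. ennreal \<bar>v\<bar>"] U_comp[OF assms])
  also have "\<dots> \<le> supnorm M N1 (U N1 n g)" by (rule U_norm[OF assms(2)])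
  finally show ?thesis .
qed




lemma gen_Pow: "{U N n h -` B \<inter> space (Spow M N) | h B. h \<in> borel_measurable (Spow M n) \<and> B \<in> sets borel}
   \<subseteq> Pow (space (Spow M N))"
  by auto

lemma space_U_sigma: "space (U_sigma M N n) = space (Spow M N)"
  unfolding U_sigma_def by (rule space_measure_of_conv)

lemma sets_U_sigma: "sets (U_sigma M N n) = sigma_sets (space (Spow M N))
     {U N n h -` B \<inter> space (Spow M N) | h B. h \<in> borel_measurable (Spow M n) \<and> B \<in> sets borel}"
  unfolding U_sigma_def by (rule sets_measure_of[OF gen_Pow])

lemma U_meas:
  assumes h: "h \<in> borel_measurable (Spow M n)"
  shows "U N n h \<in> borel_measurable (U_sigma M N n)"
proof (rule measurableI)
  fix B :: "real set" assume B: "B \<in> sets borel"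
  have "U N n h -` B \<inter> space (U_sigma M N n) \<in>
     {U N n h -` B \<inter> space (Spow M N) | h B. h \<in> borel_measurable (Spow M n) \<and> B \<in> sets borel}"
    using h B by (auto simp: space_U_sigma)
  then show "U N n h -` B \<inter> space (U_sigma M N n) \<in> sets (U_sigma M N n)"
    unfolding sets_U_sigma by (rule sigma_sets.Basic)
qed simp

lemma psum_meas:
  fixes \<phi> :: "'a \<Rightarrow> real"
  assumes n1: "1 \<le> n" and nN: "n \<le> N" and phi: "\<phi> \<in> borel_measurable M"
  shows "(\<lambda>x. \<Sum>k<N. \<phi> (x k)) \<in> borel_measurable (U_sigma M N n)"
proof -
  define h where "h y = \<phi> (y 0)" for y :: "nat \<Rightarrow> 'a"
  have hm: "h \<in> borel_measurable (Spow M n)"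
    unfolding h_def using n1
    by (intro measurable_compose[OF measurable_component_singleton[where I="{..<n}" and M="\<lambda>_. M" and i=0] phi]) auto
  define P where "P = (\<Prod>j\<in>{1..<n}. real (N - j))"
  have Ppos: "P > 0" unfolding P_def using nN by (intro prod_pos) auto
  have fpos: "falling N n > 0" using falling_pos[OF nN] .
  have eq: "U N n h x = (P / falling N n) * (\<Sum>k<N. \<phi> (x k))" for x
  proof -
    have "U N n h x = (1 / falling N n) * (\<Sum>\<sigma>\<in>injs n N. (\<lambda>\<rho>. \<phi> (x (\<rho> 0))) (restrict \<sigma> {..<1}))"
      unfolding U_def h_def using n1 by simp
    also have "\<dots> = (1 / falling N n) * (P * (\<Sum>\<rho>\<in>injs 1 N. \<phi> (x (\<rho> 0))))"
      unfolding P_def using sum_injs_restrict[OF n1, of "\<lambda>\<rho>. \<phi> (x (\<rho> 0))" N] by simp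
    also have "\<dots> = (P / falling N n) * (\<Sum>k<N. \<phi> (x k))"
      using sum_injs_1[of "\<lambda>k. \<phi> (x k)" N] by simp
    finally show ?thesis .
  qed
  have "(\<lambda>x. (falling N n / P) * U N n h x) \<in> borel_measurable (U_sigma M N n)"
    by (intro borel_measurable_times borel_measurable_const U_meas hm)
  moreover have "(\<lambda>x. (falling N n / P) * U N n h x) = (\<lambda>x. \<Sum>k<N. \<phi> (x k))"
    using Ppos fpos by (simp add: eq)
  ultimately show ?thesis by simp
qed

definition pp :: "nat \<Rightarrow> (nat \<Rightarrow> nat) \<Rightarrow> (nat \<Rightarrow> 'a) \<Rightarrow> (nat \<Rightarrow> 'a)" where
  "pp N \<pi> x = restrict (\<lambda>i. x (\<pi> i)) {..<N}"

definition SA :: "nat \<Rightarrow> (nat \<Rightarrow> 'a) set \<Rightarrow> (nat \<Rightarrow> 'a) \<Rightarrow> real" where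
  "SA N A x = (\<Sum>\<pi>\<in>{\<pi>. \<pi> permutes {..<N}}. indicator A (pp N \<pi> x))"

lemma pp_space:
  assumes "\<pi> permutes {..<N}" "x \<in> space (Spow M N)"
  shows "pp N \<pi> x \<in> space (Spow M N)"
proof -
  have "\<And>i. i < N \<Longrightarrow> \<pi> i < N" using permutes_in_image[OF assms(1)] by auto
  then show ?thesis using assms(2) by (auto simp: pp_def space_PiM PiE_iff)
qed

lemma count_mset_map_upt:
  "real (count (mset (map f [0..<m])) T) = (\<Sum>k<m. if f k = T then 1 else 0)"
  by (induction m) auto




lemma SA_rect_inv:
  fixes Y :: "nat \<Rightarrow> 'a set" and N :: nat and x y :: "nat \<Rightarrow> 'a"
  defines "t \<equiv> \<lambda>y. {i\<in>{..<N}. y \<in> Y i}"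
  assumes g: "mset (map (\<lambda>k. t (x k)) [0..<N]) = mset (map (\<lambda>k. t (y k)) [0..<N])"
  shows "SA N (PiE {..<N} Y) x = SA N (PiE {..<N} Y) y"
proof -
  obtain p where p: "p permutes {..<length (map (\<lambda>k. t (y k)) [0..<N])}"
    "permute_list p (map (\<lambda>k. t (y k)) [0..<N]) = map (\<lambda>k. t (x k)) [0..<N]"
    using mset_eq_permutation[OF g] by blast
  have p1: "p permutes {..<N}" using p(1) by simp
  have tp: "t (y (p k)) = t (x k)" if "k < N" for k
  proof -
    have "permute_list p (map (\<lambda>k. t (y k)) [0..<N]) ! k = map (\<lambda>k. t (x k)) [0..<N] ! k"
      using p(2) by simp
    moreover have "permute_list p (map (\<lambda>k. t (y k)) [0..<N]) ! k = map (\<lambda>k. t (y k)) [0..<N] ! p k"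
      using p(1) that by (intro permute_list_nth) auto
    moreover have "p k < N" using permutes_in_image[OF p1] that by auto
    ultimately show ?thesis using that by simp
  qed
  have ind: "indicator (PiE {..<N} Y) (pp N \<pi> z) = (if \<forall>i<N. z (\<pi> i) \<in> Y i then 1 else (0::real))" for \<pi> z
    by (auto simp: pp_def indicator_def restrict_PiE_iff)
  have "SA N (PiE {..<N} Y) y = (\<Sum>\<pi>\<in>{\<pi>. \<pi> permutes {..<N}}. (\<lambda>\<pi>. if \<forall>i<N. y (\<pi> i) \<in> Y i then 1 else (0::real)) \<pi>)"
    unfolding SA_def ind ..
  also have "\<dots> = (\<Sum>\<pi>\<in>{\<pi>. \<pi> permutes {..<N}}. (\<lambda>\<pi>. if \<forall>i<N. y (\<pi> i) \<in> Y i then 1 else (0::real)) (p \<circ> \<pi>))"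
    by (rule setum_permutations_compose_left[OF p1])
  also have "\<dots> = (\<Sum>\<pi>\<in>{\<pi>. \<pi> permutes {..<N}}. (if \<forall>i<N. x (\<pi> i) \<in> Y i then 1 else (0::real)))"
  proof (rule sum.cong[OF refl])
    fix \<pi> assume "\<pi> \<in> {\<pi>. \<pi> permutes {..<N}}"
    then have pi: "\<And>i. i < N \<Longrightarrow> \<pi> i < N" using permutes_in_image by fastforce
    have "(\<forall>i<N. y (p (\<pi> i)) \<in> Y i) \<longleftrightarrow> (\<forall>i<N. x (\<pi> i) \<in> Y i)"
    proof -
      have "y (p (\<pi> i)) \<in> Y i \<longleftrightarrow> x (\<pi> i) \<in> Y i" if i: "i < N" for i
      proof -
        have "y (p (\<pi> i)) \<in> Y i \<longleftrightarrow> i \<in> t (y (p (\<pi> i)))" using i by (simp add: t_def)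
        also have "\<dots> \<longleftrightarrow> i \<in> t (x (\<pi> i))" using tp[OF pi[OF i]] by simp
        also have "\<dots> \<longleftrightarrow> x (\<pi> i) \<in> Y i" using i by (simp add: t_def)
        finally show ?thesis .
      qed
      then show ?thesis by blast
    qed
    then show "(\<lambda>\<pi>. if \<forall>i<N. y (\<pi> i) \<in> Y i then 1 else (0::real)) (p \<circ> \<pi>) =
        (if \<forall>i<N. x (\<pi> i) \<in> Y i then 1 else 0)" by simp
  qed
  also have "\<dots> = SA N (PiE {..<N} Y) x"
    unfolding SA_def ind ..
  finally show ?thesis by simp
qed

lemma SA_rect_meas:
  fixes Y :: "nat \<Rightarrow> 'a set"
  assumes n1: "1 \<le> n" and nN: "n \<le> N" and Y: "\<And>i. Y i \<in> sets M"
  shows "SA N (PiE {..<N} Y) \<in> borel_measurable (U_sigma M N n)"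
proof -
  define t where "t = (\<lambda>y. {i\<in>{..<N}. y \<in> Y i})"
  define g where "g x = mset (map (\<lambda>k. t (x k)) [0..<N])" for x :: "nat \<Rightarrow> 'a"
  define A where "A = mset ` {xs. set xs \<subseteq> Pow {..<N} \<and> length xs = N}"
  have cA: "countable A" unfolding A_def
    by (intro countable_image countable_finite finite_lists_length_eq) auto
  have gA: "g x \<in> A" for x
    unfolding A_def g_def by (rule imageI) (auto simp: t_def)
  have N1: "N \<ge> 1" using n1 nN by simp
  have cnt_meas: "(\<lambda>x. real (count (g x) T)) \<in> borel_measurable (U_sigma M N n)" if T: "T \<subseteq> {..<N}" for T
  proof -
    define \<phi> where "\<phi> y = (if t y = T then 1 else (0::real))" for y
    have teq: "t y = T \<longleftrightarrow> (\<forall>i\<in>{..<N}. y \<in> Y i \<longleftrightarrow> i \<in> T)" for y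
      using T by (auto simp: t_def)
    have "{y. t y = T} \<inter> space M = (\<Inter>i\<in>{..<N}. if i \<in> T then Y i else space M - Y i)"
    proof -
      have Ys: "\<And>i. Y i \<subseteq> space M" using Y sets.sets_into_space by blast
      show ?thesis
      proof (intro equalityI subsetI)
        fix y assume "y \<in> {y. t y = T} \<inter> space M"
        then show "y \<in> (\<Inter>i\<in>{..<N}. if i \<in> T then Y i else space M - Y i)"
          by (auto simp: teq)
      next
        fix y assume y: "y \<in> (\<Inter>i\<in>{..<N}. if i \<in> T then Y i else space M - Y i)"
        have "y \<in> (if 0 \<in> T then Y 0 else space M - Y 0)" using y N1 by auto
        then have sp: "y \<in> space M" using Ys by (auto split: if_splits)
        have "\<forall>i\<in>{..<N}. y \<in> Y i \<longleftrightarrow> i \<in> T"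
        proof
          fix i assume "i \<in> {..<N}"
          then have "y \<in> (if i \<in> T then Y i else space M - Y i)" using y by blast
          then show "y \<in> Y i \<longleftrightarrow> i \<in> T" by (auto split: if_splits)
        qed
        then show "y \<in> {y. t y = T} \<inter> space M" using sp teq by auto
      qed
    qed
    also have "\<dots> \<in> sets M"
      using N1 Y by (intro sets.finite_INT) (auto simp: lessThan_empty_iff)
    finally have "{y. t y = T} \<inter> space M \<in> sets M" .
    then have "(indicator {y. t y = T} :: 'a \<Rightarrow> real) \<in> borel_measurable M"
      using borel_measurable_indicator_iff[of "{y. t y = T}" M] by simp
    moreover have "(indicator {y. t y = T} :: 'a \<Rightarrow> real) = \<phi>"
      unfolding \<phi>_def by (rule ext) (simp add: indicator_def)
    ultimately have "\<phi> \<in> borel_measurable M" by simp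
    then have "(\<lambda>x. \<Sum>k<N. \<phi> (x k)) \<in> borel_measurable (U_sigma M N n)"
      by (rule psum_meas[OF n1 nN])
    moreover have "(\<lambda>x. \<Sum>k<N. \<phi> (x k)) = (\<lambda>x. real (count (g x) T))"
      unfolding g_def \<phi>_def by (rule ext, rule count_mset_map_upt[symmetric])
    ultimately show ?thesis by simp
  qed
  have gm: "g \<in> measurable (U_sigma M N n) (count_space A)"
  proof (subst measurable_count_space_eq_countable[OF cA], intro conjI ballI)
    show "g \<in> space (U_sigma M N n) \<rightarrow> A" using gA by auto
    fix a assume a: "a \<in> A"
    have seta: "set_mset a \<subseteq> Pow {..<N}" using a unfolding A_def by auto
    have setg: "set_mset (g x) \<subseteq> Pow {..<N}" for x using gA[of x] unfolding A_def by auto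
    have "g -` {a} \<inter> space (U_sigma M N n) =
        (\<Inter>T\<in>Pow {..<N}. (\<lambda>x. real (count (g x) T)) -` {real (count a T)} \<inter> space (U_sigma M N n))"
    proof (intro equalityI subsetI)
      fix x assume x: "x \<in> (\<Inter>T\<in>Pow {..<N}. (\<lambda>x. real (count (g x) T)) -` {real (count a T)} \<inter> space (U_sigma M N n))"
      have xT: "x \<in> (\<lambda>x. real (count (g x) T)) -` {real (count a T)} \<inter> space (U_sigma M N n)"
        if "T \<in> Pow {..<N}" for T
        using x that by (rule INT_D)
      have c: "\<And>T. T \<in> Pow {..<N} \<Longrightarrow> count (g x) T = count a T"
        using xT by simp
      have xs: "x \<in> space (U_sigma M N n)" using xT[of "{}"] by simp
      have "g x = a"
      proof (rule multiset_eqI)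
        fix T show "count (g x) T = count a T"
        proof (cases "T \<in> Pow {..<N}")
          case False
          then have "T \<notin># g x" "T \<notin># a" using seta setg[of x] by auto
          then show ?thesis by (simp add: not_in_iff)
        qed (rule c)
      qed
      then show "x \<in> g -` {a} \<inter> space (U_sigma M N n)" using xs by simp
    qed auto
    also have "\<dots> \<in> sets (U_sigma M N n)"
      by (intro sets.finite_INT measurable_sets[OF cnt_meas] borel_closed closed_singleton) auto
    finally show "g -` {a} \<inter> space (U_sigma M N n) \<in> sets (U_sigma M N n)" .
  qed
  define F where "F m = SA N (PiE {..<N} Y) (SOME x. g x = m)" for m
  have "SA N (PiE {..<N} Y) = (\<lambda>x. F (g x))"
  proof
    fix x
    have "g (SOME z. g z = g x) = g x" by (rule someI[where x=x]) (rule refl)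
    then have "SA N (PiE {..<N} Y) (SOME z. g z = g x) = SA N (PiE {..<N} Y) x"
      unfolding g_def t_def by (rule SA_rect_inv)
    then show "SA N (PiE {..<N} Y) x = F (g x)" by (simp add: F_def)
  qed
  moreover have "(\<lambda>x. F (g x)) \<in> borel_measurable (U_sigma M N n)"
    by (rule measurable_compose[OF gm]) simp
  ultimately show ?thesis by simp
qed




lemma card_perms: "card {\<pi>. \<pi> permutes {..<N}} = fact N"
  by (rule card_permutations) auto

lemma finite_perms: "finite {\<pi>. \<pi> permutes {..<N::nat}}"
  by (rule finite_permutations) auto

lemma SA_meas:
  assumes n1: "1 \<le> n" and nN: "n \<le> N" and A: "A \<in> sets (Spow M N)"
  shows "SA N A \<in> borel_measurable (U_sigma M N n)"
proof -
  let ?\<Omega> = "PiE {..<N} (\<lambda>_. space M)"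
  have sp: "space (U_sigma M N n) = ?\<Omega>" by (simp add: space_U_sigma space_PiM)
  from A have AS: "A \<in> sigma_sets ?\<Omega> (prod_algebra {..<N} (\<lambda>_. M))" by (simp add: sets_PiM)
  show ?thesis
  proof (rule sigma_sets_induct_disjoint[where P="\<lambda>A. SA N A \<in> borel_measurable (U_sigma M N n)",
        OF Int_stable_prod_algebra prod_algebra_sets_into_space AS])
    fix A assume "A \<in> prod_algebra {..<N} (\<lambda>_. M)"
    then obtain J E where A: "A = prod_emb {..<N} (\<lambda>_. M) J (PiE J E)" and J: "J \<subseteq> {..<N}"
      and E: "\<And>i. i \<in> J \<Longrightarrow> E i \<in> sets M"
      by (auto elim!: prod_algebraE)
    have "A = PiE {..<N} (\<lambda>i. if i \<in> J then E i else space M)"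
      unfolding A using J E by (subst prod_emb_PiE) (auto dest: sets.sets_into_space)
    moreover have "SA N (PiE {..<N} (\<lambda>i. if i \<in> J then E i else space M)) \<in> borel_measurable (U_sigma M N n)"
      using E by (intro SA_rect_meas[OF n1 nN]) auto
    ultimately show "SA N A \<in> borel_measurable (U_sigma M N n)" by simp
  next
    show "SA N {} \<in> borel_measurable (U_sigma M N n)" unfolding SA_def[abs_def] by simp
  next
    fix A assume compl: "A \<in> sigma_sets ?\<Omega> (prod_algebra {..<N} (\<lambda>_. M))" "SA N A \<in> borel_measurable (U_sigma M N n)"
    have "SA N (?\<Omega> - A) x = fact N - SA N A x" if x: "x \<in> space (U_sigma M N n)" for x
    proof -
      have "SA N (?\<Omega> - A) x = (\<Sum>\<pi>\<in>{\<pi>. \<pi> permutes {..<N}}. 1 - indicator A (pp N \<pi> x))"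
        unfolding SA_def
      proof (rule sum.cong[OF refl])
        fix \<pi> assume "\<pi> \<in> {\<pi>. \<pi> permutes {..<N}}"
        then have "pp N \<pi> x \<in> ?\<Omega>" using pp_space[of \<pi> N x M] x by (simp add: sp space_PiM)
        then show "indicator (?\<Omega> - A) (pp N \<pi> x) = 1 - (indicator A (pp N \<pi> x) :: real)"
          by (simp add: indicator_def)
      qed
      also have "\<dots> = fact N - SA N A x"
        unfolding SA_def by (simp add: sum_subtractf card_perms)
      finally show ?thesis .
    qed
    moreover have "(\<lambda>x. fact N - SA N A x) \<in> borel_measurable (U_sigma M N n)"
      using compl(2) by (intro borel_measurable_diff borel_measurable_const)
    ultimately show "SA N (?\<Omega> - A) \<in> borel_measurable (U_sigma M N n)" by (subst measurable_cong) auto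
  next
    fix A :: "nat \<Rightarrow> _" assume union: "disjoint_family A" "range A \<subseteq> sigma_sets ?\<Omega> (prod_algebra {..<N} (\<lambda>_. M))"
      "\<And>i. SA N (A i) \<in> borel_measurable (U_sigma M N n)"
    show "SA N (\<Union>i. A i) \<in> borel_measurable (U_sigma M N n)"
    proof (rule borel_measurable_LIMSEQ_real)
      fix x
      have "(\<lambda>m. \<Sum>\<pi>\<in>{\<pi>. \<pi> permutes {..<N}}. \<Sum>i<m. indicator (A i) (pp N \<pi> x) :: real)
          \<longlonglongrightarrow> (\<Sum>\<pi>\<in>{\<pi>. \<pi> permutes {..<N}}. indicator (\<Union>i. A i) (pp N \<pi> x))"
      proof (rule tendsto_sum)
        fix \<pi>
        show "(\<lambda>m. \<Sum>i<m. indicator (A i) (pp N \<pi> x) :: real) \<longlonglongrightarrow> indicator (\<Union>i. A i) (pp N \<pi> x)"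
          using indicator_sums[of A "pp N \<pi> x"] union(1) unfolding disjoint_family_on_def by (simp add: sums_def)
      qed
      then show "(\<lambda>m. \<Sum>i<m. SA N (A i) x) \<longlonglongrightarrow> SA N (\<Union>i. A i) x"
        unfolding SA_def by (subst sum.swap) simp
    next
      fix m show "(\<lambda>x. \<Sum>i<m. SA N (A i) x) \<in> borel_measurable (U_sigma M N n)"
        using union(3) by (intro borel_measurable_sum) auto
    qed
  qed
qed

lemma sym_meas:
  assumes n1: "1 \<le> n" and nN: "n \<le> N"
    and f: "f \<in> borel_measurable (Spow M N)" and sym: "symmetric_fun M N f"
  shows "f \<in> borel_measurable (U_sigma M N n)"
proof (rule measurableI)
  fix B :: "real set" assume B: "B \<in> sets borel"
  define C where "C = f -` B \<inter> space (Spow M N)"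
  have C: "C \<in> sets (Spow M N)" unfolding C_def using f B by (rule measurable_sets)
  have fpos: "(fact N :: real) > 0" by simp
  have eq: "SA N C x = fact N * indicator C x" if x: "x \<in> space (U_sigma M N n)" for x
  proof -
    have xs: "x \<in> space (Spow M N)" using x by (simp add: space_U_sigma)
    have "SA N C x = (\<Sum>\<pi>\<in>{\<pi>. \<pi> permutes {..<N}}. indicator C x)"
      unfolding SA_def
    proof (rule sum.cong[OF refl])
      fix \<pi> assume "\<pi> \<in> {\<pi>. \<pi> permutes {..<N}}"
      then have p: "\<pi> permutes {..<N}" by simp
      have "f (pp N \<pi> x) = f x" using sym p xs unfolding symmetric_fun_def pp_def by blast
      then show "indicator C (pp N \<pi> x) = (indicator C x :: real)"
        using pp_space[OF p xs] xs by (simp add: C_def indicator_def)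
    qed
    also have "\<dots> = fact N * indicator C x" by (simp add: card_perms)
    finally show ?thesis .
  qed
  have "(\<lambda>x. (1 / fact N) * SA N C x) \<in> borel_measurable (U_sigma M N n)"
    by (intro borel_measurable_times borel_measurable_const SA_meas[OF n1 nN C])
  moreover have "(\<lambda>x. (1 / fact N) * SA N C x) \<in> borel_measurable (U_sigma M N n) \<longleftrightarrow>
      (indicator C :: _ \<Rightarrow> real) \<in> borel_measurable (U_sigma M N n)"
    by (rule measurable_cong) (simp add: eq)
  ultimately have "(indicator C :: _ \<Rightarrow> real) \<in> borel_measurable (U_sigma M N n)" by simp
  then have "C \<inter> space (U_sigma M N n) \<in> sets (U_sigma M N n)"
    by (simp add: borel_measurable_indicator_iff)
  moreover have "C \<inter> space (U_sigma M N n) = f -` B \<inter> space (U_sigma M N n)"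
    by (simp add: C_def space_U_sigma)
  ultimately show "f -` B \<inter> space (U_sigma M N n) \<in> sets (U_sigma M N n)" by simp
qed simp


theorem lemma3:
  fixes M :: "'a measure" and n N :: nat
    and g :: "(nat \<Rightarrow> 'a) \<Rightarrow> real" and f :: "(nat \<Rightarrow> 'a) \<Rightarrow> real"
  assumes "1 \<le> n" and "n \<le> N"
    and "f \<in> borel_measurable (Spow M N)" and "symmetric_fun M N f"
  shows "supnorm M N (U N n g) \<le> supnorm M n g
    \<and> (\<forall>n1 n2 n3 (h :: (nat \<Rightarrow> 'a) \<Rightarrow> real). n1 \<le> n2 \<longrightarrow> n2 \<le> n3 \<longrightarrow>
           (\<forall>x \<in> space (Spow M n3). U n3 n1 h x = U n3 n2 (U n2 n1 h) x))
    \<and> (\<forall>N1 N2. n \<le> N1 \<longrightarrow> N1 \<le> N2 \<longrightarrow> supnorm M N2 (U N2 n g) \<le> supnorm M N1 (U N1 n g))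
    \<and> f \<in> borel_measurable (U_sigma M N n)"
  using U_norm[OF assms(2)] U_comp U_norm_mono sym_meas[OF assms] by blast

end
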